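(* Let $h>0$, let $\Omega\subset\mathbb{R}^2$ be a bounded domain and $\vec c\in\mathbb{R}^2$. With the discrete Heaviside function $H$ and $\operatorname{G}H$ as in the context, \[ \sum_{i,j}(\operatorname{G}H)_{ij}=0\qquad\text{and}\qquad\sum_{i,j}\big((x_i,y_j)-\vec c\big)\times(\operatorname{G}H)_{ij}=0, \] where the sums run over all $(i,j)\in\mathbb{Z}^2$.
   Context: $x_i=ih$, $y_j=jh$, $x_{i\pm1/2}=(i\pm\frac12)h$; edges $E_{i+1/2,j}=\{x_{i+1/2}\}\times[y_{j-1/2},y_{j+1/2}]$, $E_{i,j+1/2}=[x_{i-1/2},x_{i+1/2}]\times\{y_{j+1/2}\}$. Discrete Heaviside: $H_{i+1/2,j}=\mathrm{length}(E_{i+1/2,j}\cap\Omega)/h$, $H_{i,j+1/2}=\mathrm{length}(E_{i,j+1/2}\cap\Omega)/h$. $(\operatorname{G}H)_{ij}=\big((H_{i+1/2,j}-H_{i-1/2,j})/h,\;(H_{i,j+1/2}-H_{i,j-1/2})/h\big)$. The planar cross product is the scalar $(a_1,a_2)\times(b_1,b_2)=a_1b_2-a_2b_1$. *)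

theory Defs
  imports "HOL-Analysis.Analysis"
begin

text \<open>Edge E_{i+1/2,j} is the vertical segment
  {x_{i+1/2}} x [y_{j-1/2}, y_{j+1/2}]; HeavX h \<Omega> i j is H_{i+1/2,j}.
  Edge E_{i,j+1/2} is the horizontal segment [x_{i-1/2}, x_{i+1/2}] x {y_{j+1/2}};
  HeavY h \<Omega> i j is H_{i,j+1/2}.\<close>

definition HeavX :: "real \<Rightarrow> (real \<times> real) set \<Rightarrow> int \<Rightarrow> int \<Rightarrow> real" where
  "HeavX h \<Omega> i j =
     measure lborel {y \<in> {(real_of_int j - 1/2) * h .. (real_of_int j + 1/2) * h}.
                      ((real_of_int i + 1/2) * h, y) \<in> \<Omega>} / h"

definition HeavY :: "real \<Rightarrow> (real \<times> real) set \<Rightarrow> int \<Rightarrow> int \<Rightarrow> real" where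
  "HeavY h \<Omega> i j =
     measure lborel {x \<in> {(real_of_int i - 1/2) * h .. (real_of_int i + 1/2) * h}.
                      (x, (real_of_int j + 1/2) * h) \<in> \<Omega>} / h"

definition GH :: "real \<Rightarrow> (real \<times> real) set \<Rightarrow> int \<Rightarrow> int \<Rightarrow> real \<times> real" where
  "GH h \<Omega> i j =
     ((HeavX h \<Omega> i j - HeavX h \<Omega> (i - 1) j) / h,
      (HeavY h \<Omega> i j - HeavY h \<Omega> i (j - 1)) / h)"

definition cross2 :: "real \<times> real \<Rightarrow> real \<times> real \<Rightarrow> real" where
  "cross2 a b = fst a * snd b - snd a * fst b"

end

theory Submission
  imports Defs
begin

lemma shift_cancel:
  fixes f :: "'a \<Rightarrow> real"
  assumes fin: "finite {x. f x \<noteq> 0}" and b: "bij \<sigma>"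
  shows "((\<lambda>x. f x - f (\<sigma> x)) has_sum 0) UNIV"
proof -
  have s: "(f has_sum (\<Sum>x\<in>{x. f x \<noteq> 0}. f x)) UNIV"
    by (rule has_sum_finite_neutralI[OF fin]) auto
  have s2: "((\<lambda>x. f (\<sigma> x)) has_sum (\<Sum>x\<in>{x. f x \<noteq> 0}. f x)) UNIV"
    using s b by (simp add: has_sum_reindex_bij_betw)
  have "((\<lambda>x. f x + - f (\<sigma> x)) has_sum ((\<Sum>x\<in>{x. f x \<noteq> 0}. f x) + - (\<Sum>x\<in>{x. f x \<noteq> 0}. f x))) UNIV"
    by (intro has_sum_add s has_sum_uminusI s2)
  then show ?thesis by simp
qed

lemma support_box:
  fixes h :: real and \<Omega> :: "(real \<times> real) set"
  assumes h: "h > 0" and bd: "bounded \<Omega>"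
  obtains N :: int where
    "\<And>i j. HeavX h \<Omega> i j \<noteq> 0 \<Longrightarrow> \<bar>i\<bar> \<le> N \<and> \<bar>j\<bar> \<le> N"
    "\<And>i j. HeavY h \<Omega> i j \<noteq> 0 \<Longrightarrow> \<bar>i\<bar> \<le> N \<and> \<bar>j\<bar> \<le> N"
proof -
  obtain R where R: "\<And>p. p \<in> \<Omega> \<Longrightarrow> norm p \<le> R"
    using bd by (auto simp: bounded_iff)
  have fstR: "\<bar>fst p\<bar> \<le> R" and sndR: "\<bar>snd p\<bar> \<le> R" if "p \<in> \<Omega>" for p
  proof -
    have "norm p \<le> R" using R that by blast
    moreover have "\<bar>fst p\<bar> \<le> norm p" "\<bar>snd p\<bar> \<le> norm p"
      by (metis prod.collapse norm_fst_le real_norm_def,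
          metis prod.collapse norm_snd_le real_norm_def)
    ultimately show "\<bar>fst p\<bar> \<le> R" "\<bar>snd p\<bar> \<le> R" by auto
  qed
  define N where "N = \<lceil>R / h\<rceil> + 1"
  have key: "\<bar>k\<bar> \<le> N" if "\<bar>t\<bar> \<le> R" "t \<ge> (real_of_int k - 1/2) * h" "t \<le> (real_of_int k + 1/2) * h" for k t
  proof -
    have "real_of_int k * h \<le> R + h" "- (real_of_int k * h) \<le> R + h"
      using that h by (auto simp: algebra_simps abs_le_iff)
    hence "real_of_int k \<le> R/h + 1" "- real_of_int k \<le> R/h + 1"
      using h by (auto simp: field_simps)
    moreover have "R/h \<le> real_of_int \<lceil>R/h\<rceil>" by linarith
    ultimately have "real_of_int k \<le> real_of_int N \<and> - real_of_int k \<le> real_of_int N" unfolding N_def by linarith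
    thus ?thesis by linarith
  qed
  show ?thesis
  proof (rule that)
    fix i j assume "HeavX h \<Omega> i j \<noteq> 0"
    then obtain y where y: "y \<in> {(real_of_int j - 1/2) * h .. (real_of_int j + 1/2) * h}"
      "((real_of_int i + 1/2) * h, y) \<in> \<Omega>"
      unfolding HeavX_def by (metis (no_types, lifting) empty_Collect_eq measure_empty div_0)
    show "\<bar>i\<bar> \<le> N \<and> \<bar>j\<bar> \<le> N"
    proof
      show "\<bar>i\<bar> \<le> N" using fstR[OF y(2)] h by (intro key[of "(real_of_int i + 1/2) * h"]) (auto simp: algebra_simps)
      show "\<bar>j\<bar> \<le> N" using sndR[OF y(2)] y(1) by (intro key[of y]) auto
    qed
  next
    fix i j assume "HeavY h \<Omega> i j \<noteq> 0"
    then obtain x where x: "x \<in> {(real_of_int i - 1/2) * h .. (real_of_int i + 1/2) * h}"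
      "(x, (real_of_int j + 1/2) * h) \<in> \<Omega>"
      unfolding HeavY_def by (metis (no_types, lifting) empty_Collect_eq measure_empty div_0)
    show "\<bar>i\<bar> \<le> N \<and> \<bar>j\<bar> \<le> N"
    proof
      show "\<bar>j\<bar> \<le> N" using sndR[OF x(2)] h by (intro key[of "(real_of_int j + 1/2) * h"]) (auto simp: algebra_simps)
      show "\<bar>i\<bar> \<le> N" using fstR[OF x(2)] x(1) by (intro key[of x]) auto
    qed
  qed
qed

theorem lemma4p5:
  fixes h :: real and \<Omega> :: "(real \<times> real) set" and c :: "real \<times> real"
  assumes "h > 0" and "open \<Omega>" and "connected \<Omega>" and "bounded \<Omega>"
  shows "((\<lambda>(i, j). GH h \<Omega> i j) has_sum 0) (UNIV :: (int \<times> int) set)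
         \<and> ((\<lambda>(i, j). cross2 ((real_of_int i * h, real_of_int j * h) - c) (GH h \<Omega> i j))
               has_sum 0) (UNIV :: (int \<times> int) set)"
proof -
  obtain N where NX: "\<And>i j. HeavX h \<Omega> i j \<noteq> 0 \<Longrightarrow> \<bar>i\<bar> \<le> N \<and> \<bar>j\<bar> \<le> N"
    and NY: "\<And>i j. HeavY h \<Omega> i j \<noteq> 0 \<Longrightarrow> \<bar>i\<bar> \<le> N \<and> \<bar>j\<bar> \<le> N"
    using support_box[OF assms(1) assms(4)] by blast
  define B where "B = {-N..N} \<times> {-N..N}"
  have finB: "finite B" unfolding B_def by auto
  have finsub: "finite {x. f x \<noteq> 0}" if "\<And>i j. f (i,j) \<noteq> 0 \<Longrightarrow> (i,j) \<in> B" for f :: "int \<times> int \<Rightarrow> real"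
    by (rule finite_subset[OF _ finB]) (use that in auto)
  define X where "X = (\<lambda>(i,j). HeavX h \<Omega> i j / h)"
  define Y where "Y = (\<lambda>(i,j). HeavY h \<Omega> i j / h)"
  define sx :: "int \<times> int \<Rightarrow> int \<times> int" where "sx = (\<lambda>(i,j). (i - 1, j))"
  define sy :: "int \<times> int \<Rightarrow> int \<times> int" where "sy = (\<lambda>(i,j). (i, j - 1))"
  have bx: "bij sx"
    unfolding sx_def by (rule bij_betwI[where g="\<lambda>(i,j). (i+1,j)"]) auto
  have by': "bij sy"
    unfolding sy_def by (rule bij_betwI[where g="\<lambda>(i,j). (i,j+1)"]) auto
  have fX: "finite {x. X x \<noteq> 0}"
    by (rule finsub) (auto simp: X_def B_def abs_le_iff dest!: NX)
  have fY: "finite {x. Y x \<noteq> 0}"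
    by (rule finsub) (auto simp: Y_def B_def abs_le_iff dest!: NY)
  define A1 where "A1 = (\<lambda>(i,j). (real_of_int i * h - fst c) * Y (i,j))"
  define A2 where "A2 = (\<lambda>(i,j). (real_of_int j * h - snd c) * X (i,j))"
  have fA1: "finite {x. A1 x \<noteq> 0}"
    by (rule finite_subset[OF _ fY]) (auto simp: A1_def)
  have fA2: "finite {x. A2 x \<noteq> 0}"
    by (rule finite_subset[OF _ fX]) (auto simp: A2_def)
  have hX: "((\<lambda>x. X x - X (sx x)) has_sum 0) UNIV" by (rule shift_cancel[OF fX bx])
  have hY: "((\<lambda>x. Y x - Y (sy x)) has_sum 0) UNIV" by (rule shift_cancel[OF fY by'])
  have hA1: "((\<lambda>x. A1 x - A1 (sy x)) has_sum 0) UNIV" by (rule shift_cancel[OF fA1 by'])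
  have hA2: "((\<lambda>x. A2 x - A2 (sx x)) has_sum 0) UNIV" by (rule shift_cancel[OF fA2 bx])
  have bl1: "bounded_linear (\<lambda>t::real. (t, 0::real))"
    by (intro bounded_linear_Pair bounded_linear_ident bounded_linear_zero)
  have bl2: "bounded_linear (\<lambda>t::real. (0::real, t))"
    by (intro bounded_linear_Pair bounded_linear_ident bounded_linear_zero)
  have "((\<lambda>x. (X x - X (sx x), 0::real) + (0, Y x - Y (sy x))) has_sum ((0,0) + (0,0))) UNIV"
    using has_sum_bounded_linear[OF bl1 hX] has_sum_bounded_linear[OF bl2 hY]
    by (intro has_sum_add) auto
  moreover have "(\<lambda>x. (X x - X (sx x), 0::real) + (0, Y x - Y (sy x))) = (\<lambda>(i, j). GH h \<Omega> i j)"
    by (auto simp: X_def Y_def sx_def sy_def GH_def diff_divide_distrib)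
  ultimately have P1: "((\<lambda>(i, j). GH h \<Omega> i j) has_sum 0) (UNIV :: (int \<times> int) set)"
    by (simp add: zero_prod_def)
  have "((\<lambda>x. (A1 x - A1 (sy x)) + - (A2 x - A2 (sx x))) has_sum (0 + - 0)) UNIV"
    by (intro has_sum_add hA1 has_sum_uminusI hA2)
  moreover have "(\<lambda>x. (A1 x - A1 (sy x)) + - (A2 x - A2 (sx x)))
      = (\<lambda>(i, j). cross2 ((real_of_int i * h, real_of_int j * h) - c) (GH h \<Omega> i j))"
    by (auto simp: A1_def A2_def X_def Y_def sx_def sy_def GH_def cross2_def algebra_simps diff_divide_distrib)
  ultimately have P2: "((\<lambda>(i, j). cross2 ((real_of_int i * h, real_of_int j * h) - c) (GH h \<Omega> i j))
               has_sum 0) (UNIV :: (int \<times> int) set)" by simp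
  show ?thesis using P1 P2 by blast
qed

end
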